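(* Let $t\in\mathbb{Q}$, $t\neq2$, and let $x\in\overline{\mathbb{Q}}$ satisfy $f_t(x)=0$. Put $y=\sum_{i=0}^5 a_i x^i$. Then $f_t(y)=0$ and the point $[x,y,1]$ lies on $F_5\cap C_t$.
   Context: $F_5$ is the Fermat curve $x^5+y^5+z^5=0$ in $\mathbb{P}^2$. For $t\in\mathbb{Q}$, $t\neq2$, $C_t$ is the conic $x^2+y^2+z^2+t(xy+xz+yz)=0$. Put $u=\frac{3t^2-2t+2}{t^2+t-1}$, $v=\frac{t^5-5t^4+10t^3-20t^2+15t-7}{(t-2)(t^2+t-1)^2}$, $w=\frac{-3t^5+10t^4-20t^3+20t^2-20t+6}{(t-2)(t^2+t-1)^2}$, and $f_t=X^6+uX^5+vX^4+wX^3+vX^2+uX+1\in\mathbb{Q}[X]$. Put $s=(t^4-3t^3-t^2+3t+1)(t-2)$ (nonzero for rational $t\ne2$) and $a_0=-\frac{(t^2+1)(t^3-t^2+2t-3)}{s}$, $a_1=-\frac{3t^7-9t^6+16t^5-15t^4+10t^3-11t^2+8t-7}{(t^2+t-1)s}$, $a_2=\frac{2t^8-14t^7+52t^6-99t^5+100t^4-54t^3+38t^2-44t+13}{(t^2+t-1)(t-2)s}$, $a_3=\frac{t^8+t^7-21t^6+65t^5-90t^4+78t^3-57t^2+32t-15}{(t^2+t-1)(t-2)s}$, $a_4=-\frac{2t^5-6t^4+13t^3-14t^2+7t-5}{s}$, $a_5=-\frac{(t^2+t-1)(t^3-t^2+2t-3)}{s}$. *)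

theory Defs
  imports Complex_Main "HOL-Computational_Algebra.Polynomial"
begin

definition ft_u :: "rat \<Rightarrow> rat" where
  "ft_u t = (3*t^2 - 2*t + 2) / (t^2 + t - 1)"

definition ft_v :: "rat \<Rightarrow> rat" where
  "ft_v t = (t^5 - 5*t^4 + 10*t^3 - 20*t^2 + 15*t - 7) / ((t - 2) * (t^2 + t - 1)^2)"

definition ft_w :: "rat \<Rightarrow> rat" where
  "ft_w t = (-3*t^5 + 10*t^4 - 20*t^3 + 20*t^2 - 20*t + 6) / ((t - 2) * (t^2 + t - 1)^2)"

definition f_t :: "rat \<Rightarrow> rat poly" where
  "f_t t = [:1, ft_u t, ft_v t, ft_w t, ft_v t, ft_u t, 1:]"

definition s_t :: "rat \<Rightarrow> rat" where
  "s_t t = (t^4 - 3*t^3 - t^2 + 3*t + 1) * (t - 2)"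

definition a_coef :: "rat \<Rightarrow> nat \<Rightarrow> rat" where
  "a_coef t i =
    (if i = 0 then - ((t^2 + 1) * (t^3 - t^2 + 2*t - 3)) / s_t t
     else if i = 1 then - (3*t^7 - 9*t^6 + 16*t^5 - 15*t^4 + 10*t^3 - 11*t^2 + 8*t - 7)
                          / ((t^2 + t - 1) * s_t t)
     else if i = 2 then (2*t^8 - 14*t^7 + 52*t^6 - 99*t^5 + 100*t^4 - 54*t^3 + 38*t^2 - 44*t + 13)
                          / ((t^2 + t - 1) * (t - 2) * s_t t)
     else if i = 3 then (t^8 + t^7 - 21*t^6 + 65*t^5 - 90*t^4 + 78*t^3 - 57*t^2 + 32*t - 15)
                          / ((t^2 + t - 1) * (t - 2) * s_t t)
     else if i = 4 then - (2*t^5 - 6*t^4 + 13*t^3 - 14*t^2 + 7*t - 5) / s_t t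
     else if i = 5 then - ((t^2 + t - 1) * (t^3 - t^2 + 2*t - 3)) / s_t t
     else 0)"

text \<open>Fermat quintic F_5 : x^5+y^5+z^5 = 0 and conic C_t (homogeneous equations,
  so membership of a projective point is tested on any representative).\<close>
definition on_F5 :: "complex \<Rightarrow> complex \<Rightarrow> complex \<Rightarrow> bool" where
  "on_F5 x y z \<longleftrightarrow> x^5 + y^5 + z^5 = 0"

definition on_Ct :: "rat \<Rightarrow> complex \<Rightarrow> complex \<Rightarrow> complex \<Rightarrow> bool" where
  "on_Ct t x y z \<longleftrightarrow> x^2 + y^2 + z^2 + of_rat t * (x*y + x*z + y*z) = 0"

end

theory Submission
  imports Defs "HOL-Computational_Algebra.Primes"
begin

lemma no_sqrt5: "(r::rat)^2 \<noteq> 5"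
proof
  assume h: "r^2 = 5"
  obtain a b where ab: "quotient_of r = (a, b)" by (cases "quotient_of r")
  have b: "b > 0" and cop: "coprime a b" and r: "r = of_int a / of_int b"
    using ab quotient_of_denom_pos quotient_of_coprime quotient_of_div by blast+
  have "of_int (a^2) = (of_int (5*b^2) :: rat)" using h b r by (simp add: field_simps power2_eq_square)
  hence eq: "a^2 = 5*b^2" by (simp only: of_int_eq_iff)
  have p: "prime (5::int)" by simp
  have "5 dvd a^2" using eq by simp
  hence "5 dvd a" using p prime_dvd_power by blast
  then obtain k where "a = 5*k" by blast
  with eq have "b^2 = 5*k^2" by simp
  hence "5 dvd b^2" by simp
  hence "5 dvd b" using p prime_dvd_power by blast
  with \<open>5 dvd a\<close> cop have "is_unit (5::int)" by (meson coprime_common_divisor)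
  thus False by simp
qed

lemma d1_nz: "(t::rat)^2 + t - 1 \<noteq> 0"
proof
  assume "t^2 + t - 1 = 0"
  hence "(2*t+1)^2 = 5" by (simp add: algebra_simps power2_eq_square)
  thus False using no_sqrt5 by blast
qed

lemma q_nz: "(t::rat)^4 - 3*t^3 - t^2 + 3*t + 1 \<noteq> 0"
proof
  assume h: "t^4 - 3*t^3 - t^2 + 3*t + 1 = 0"
  have t0: "t \<noteq> 0" using h by auto
  have "(2*(t - 1/t) - 3)^2 - 5 = 4*(t^4 - 3*t^3 - t^2 + 3*t + 1)/t^2"
    using t0 by (simp add: field_simps power2_eq_square) algebra
  hence "(2*(t - 1/t) - 3)^2 = 5" using h by simp
  thus False using no_sqrt5 by blast
qed

lemma fracL: "(den::complex) \<noteq> 0 \<Longrightarrow> A = N/den \<Longrightarrow> D = den*c \<Longrightarrow> A*D = N*c"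
  by simp

lemma stepL:
  fixes ya yb Da Db Dc Za Zb Zc Q F :: complex
  assumes "ya*Da = Za" "yb*Db = Zb" "F = 0" "Dc*Za*Zb - Da*Db*Zc = Q*F" "Da \<noteq> 0" "Db \<noteq> 0"
  shows "(ya*yb)*Dc = Zc"
proof -
  have "Da*Db*((ya*yb)*Dc - Zc) = Dc*Za*Zb - Da*Db*Zc"
    unfolding assms(1)[symmetric] assms(2)[symmetric] by algebra
  also have "\<dots> = 0" using assms(3,4) by simp
  finally show ?thesis using assms(5,6) by simp
qed

definition Fp :: "complex \<Rightarrow> complex \<Rightarrow> complex" where "Fp x T = ((- 2 + 5*T - 5*T^3 + T^5) + (4 - 10*T + 10*T^2 - 5*T^3 - 5*T^4 + 3*T^5)*x + (- 7 + 15*T - 20*T^2 + 10*T^3 - 5*T^4 + T^5)*x^2 + (6 - 20*T + 20*T^2 - 20*T^3 + 10*T^4 - 3*T^5)*x^3 + (- 7 + 15*T - 20*T^2 + 10*T^3 - 5*T^4 + T^5)*x^4 + (4 - 10*T + 10*T^2 - 5*T^3 - 5*T^4 + 3*T^5)*x^5 + (- 2 + 5*T - 5*T^3 + T^5)*x^6)"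

definition Z1 :: "complex \<Rightarrow> complex \<Rightarrow> complex" where "Z1 x T = ((6 - 13*T + 11*T^2 - 13*T^3 + 5*T^4 + 2*T^5 - T^6 + 2*T^7 - T^8) + (- 14 + 23*T - 30*T^2 + 31*T^3 - 40*T^4 + 47*T^5 - 34*T^6 + 15*T^7 - 3*T^8)*x + (13 - 44*T + 38*T^2 - 54*T^3 + 100*T^4 - 99*T^5 + 52*T^6 - 14*T^7 + 2*T^8)*x^2 + (- 15 + 32*T - 57*T^2 + 78*T^3 - 90*T^4 + 65*T^5 - 21*T^6 + T^7 + T^8)*x^3 + (10 - 29*T + 44*T^2 - 56*T^3 + 30*T^4 + 5*T^5 - 13*T^6 + 8*T^7 - 2*T^8)*x^4 + (- 6 + 19*T - 12*T^2 - 8*T^3 + 5*T^4 - 2*T^5 + 3*T^6 + T^7 - T^8)*x^5)"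

definition Z2 :: "complex \<Rightarrow> complex \<Rightarrow> complex" where "Z2 x T = ((1 - T - 5*T^3 + 5*T^4 + 2*T^5 - 2*T^6) + (6*T - 5*T^2 + 5*T^3 - 10*T^4 + 10*T^5 - 3*T^6)*x + (1 - 3*T + 10*T^2 - 15*T^3 + 20*T^4 - 13*T^5 + 4*T^6)*x^2 + (5*T - 10*T^2 + 20*T^3 - 15*T^4 + 5*T^5)*x^3 + (- 4*T + 10*T^2 - 10*T^3 + 5*T^4 + 5*T^5 - 3*T^6)*x^4 + (2*T - 5*T^2 + 5*T^4 - T^6)*x^5)"

definition Z3 :: "complex \<Rightarrow> complex \<Rightarrow> complex" where "Z3 x T = ((4 - 4*T - 9*T^2 + 15*T^3 - 15*T^4 + 3*T^5 + 7*T^6 - 3*T^7) + (- 6 + 7*T + 8*T^2 - 35*T^3 + 35*T^4 - 22*T^5 + 14*T^6 - 4*T^7)*x + (7 - 15*T - 13*T^2 + 45*T^3 - 60*T^4 + 49*T^5 - 20*T^6 + 4*T^7)*x^2 + (- 7 + 10*T + 8*T^2 - 50*T^3 + 60*T^4 - 29*T^5 + 5*T^6 + T^7)*x^3 + (6 - 9*T - 17*T^2 + 40*T^3 - 25*T^4 - 3*T^5 + 12*T^6 - 4*T^7)*x^4 + (- 2 + 3*T + 9*T^2 - 15*T^3 - 5*T^4 + 11*T^5 + T^6 - 2*T^7)*x^5)"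

definition Z4 :: "complex \<Rightarrow> complex \<Rightarrow> complex" where "Z4 x T = ((- 1 + 4*T - 10*T^3 + 5*T^4 + 3*T^5 - 2*T^6) + (- 8*T + 10*T^3 - 10*T^4 + 5*T^5 - T^6)*x + (- 2 + 4*T - 5*T^2 - 10*T^3 + 15*T^4 - 9*T^5 + 3*T^6)*x^2 + (- 8*T + 10*T^3 - 10*T^4 + 5*T^5 - T^6)*x^3 + (- 1 + 4*T - 10*T^3 + 5*T^4 + 3*T^5 - 2*T^6)*x^4)"

definition Z5 :: "complex \<Rightarrow> complex \<Rightarrow> complex" where "Z5 x T = ((- 1) + (- 1)*x^5)"

definition Z6 :: "complex \<Rightarrow> complex \<Rightarrow> complex" where "Z6 x T = ((4 - 10*T - 6*T^2 + 29*T^3 - 12*T^4 - 12*T^5 + 10*T^6 - 2*T^7 - 2*T^8 + T^9)*x + (- 1 + 18*T + 2*T^2 - 15*T^3 - 3*T^4 - 12*T^5 + 36*T^6 - 31*T^7 + 10*T^8 - T^9)*x^2 + (6 - 8*T + 8*T^2 + 3*T^4 + 22*T^5 - 66*T^6 + 51*T^7 - 15*T^8 + T^9)*x^3 + (- 1 + 18*T + 2*T^2 - 15*T^3 - 3*T^4 - 12*T^5 + 36*T^6 - 31*T^7 + 10*T^8 - T^9)*x^4 + (4 - 10*T - 6*T^2 + 29*T^3 - 12*T^4 - 12*T^5 + 10*T^6 - 2*T^7 - 2*T^8 + T^9)*x^5)"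

lemma idstep2: "((T^2+T-1)*(T^4-3*T^3-T^2+3*T+1)) * Z1 x T * Z1 x T - ((T^2+T-1)*(T-2)^2*(T^4-3*T^3-T^2+3*T+1)) * ((T^2+T-1)*(T-2)^2*(T^4-3*T^3-T^2+3*T+1)) * Z2 x T = ((26 + 31*T - 134*T^2 - 60*T^3 - 110*T^4 + 496*T^5 + 466*T^6 - 1204*T^7 - 490*T^8 + 1760*T^9 - 103*T^10 - 1583*T^11 + 1067*T^12 + 10*T^13 - 290*T^14 + 143*T^15 - 32*T^16 + 3*T^17) + (- 32 + 52*T + 320*T^2 - 555*T^3 - 525*T^4 + 883*T^5 + 942*T^6 - 1820*T^7 + 455*T^8 + 1325*T^9 - 2284*T^10 + 1744*T^11 - 295*T^12 - 495*T^13 + 375*T^14 - 106*T^15 + 11*T^16)*x + (29 + 12*T - 139*T^2 + 30*T^3 - 175*T^4 + 954*T^5 - 1193*T^6 + 6*T^7 + 1595*T^8 - 2175*T^9 + 1543*T^10 - 366*T^11 - 433*T^12 + 445*T^13 - 150*T^14 + 2*T^15 + 11*T^16 - 2*T^17)*x^2 + (- 24 + 28*T + 122*T^2 - 275*T^3 + 505*T^4 - 804*T^5 - 122*T^6 + 1682*T^7 - 1525*T^8 + 295*T^9 + 322*T^10 - 424*T^11 + 314*T^12 - 75*T^13 - 55*T^14 + 43*T^15 - 11*T^16 + T^17)*x^3 + (18 - 33*T - 148*T^2 + 390*T^3 - 15*T^4 - 572*T^5 + 367*T^6 + 2*T^7 - 40*T^8 + 165*T^9 - 154*T^10 - 11*T^11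 + 34*T^12 - 15*T^13 + 15*T^14 - T^15 - 4*T^16 + T^17)*x^4) * Fp x T"
  unfolding Fp_def Z1_def Z1_def Z2_def by algebra

lemma idstep3: "((T^2+T-1)*(T-2)*(T^4-3*T^3-T^2+3*T+1)) * Z2 x T * Z1 x T - ((T^2+T-1)*(T^4-3*T^3-T^2+3*T+1)) * ((T^2+T-1)*(T-2)^2*(T^4-3*T^3-T^2+3*T+1)) * Z3 x T = ((2 + 31*T - 2*T^2 - 221*T^3 + 157*T^4 + 323*T^5 - 446*T^6 - 128*T^7 + 756*T^8 - 452*T^9 - 522*T^10 + 824*T^11 - 298*T^12 - 129*T^13 + 143*T^14 - 45*T^15 + 5*T^16) + (6 - 7*T - 24*T^2 + 113*T^3 - 116*T^4 - 167*T^5 + 4*T^6 + 864*T^7 - 718*T^8 - 849*T^9 + 1630*T^10 - 790*T^11 - 151*T^12 + 312*T^13 - 134*T^14 + 26*T^15 - 2*T^16)*x + (18*T + T^2 - 57*T^3 + 74*T^4 - 408*T^5 + 754*T^6 - 211*T^7 - 873*T^8 + 1361*T^9 - 837*T^10 - 15*T^11 + 349*T^12 - 193*T^13 + 26*T^14 + 8*T^15 - 2*T^16)*x^2 + (- 20*T + 28*T^2 + 119*T^3 - 318*T^4 + 341*T^5 - 107*T^6 - 558*T^7 + 991*T^8 - 452*T^9 - 276*T^10 + 392*T^11 - 153*T^12 - 19*T^13 + 43*T^14 - 16*T^15 + 2*T^16)*x^3 + (12*T - 20*T^2 - 105*T^3 + 250*T^4 + 55*T^5 - 458*T^6 + 195*T^7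 + 180*T^8 - 125*T^9 + 45*T^10 - 26*T^11 - 30*T^12 + 30*T^13 - 5*T^15 + T^16)*x^4) * Fp x T"
  unfolding Fp_def Z2_def Z1_def Z3_def by algebra

lemma idstep4: "((T^2+T-1)*(T^4-3*T^3-T^2+3*T+1)) * Z2 x T * Z2 x T - ((T^2+T-1)*(T^4-3*T^3-T^2+3*T+1)) * ((T^2+T-1)*(T^4-3*T^3-T^2+3*T+1)) * Z4 x T = ((7*T^2 + 14*T^3 - 45*T^4 - 60*T^5 + 90*T^6 + 113*T^7 - 119*T^8 - 90*T^9 + 105*T^10 + 5*T^11 - 27*T^12 + 6*T^13) + (2*T + 4*T^2 - 10*T^3 - 20*T^4 + 10*T^5 + 78*T^6 - 79*T^7 - 60*T^8 + 135*T^9 - 55*T^10 - 27*T^11 + 26*T^12 - 5*T^13)*x + (3*T^2 + T^3 - 5*T^4 + 30*T^5 - 95*T^6 - 8*T^7 + 164*T^8 - 85*T^9 - 40*T^10 + 35*T^11 - 3*T^12 - T^13)*x^2 + (- 4*T^2 + 2*T^3 + 30*T^4 - 45*T^5 - 5*T^6 + 74*T^7 - 82*T^8 - 15*T^9 + 60*T^10 - 10*T^11 - 11*T^12 + 3*T^13)*x^3 + (2*T^2 - T^3 - 20*T^4 + 20*T^5 + 45*T^6 - 47*T^7 - 39*T^8 + 35*T^9 + 15*T^10 - 10*T^11 - 2*T^12 + T^13)*x^4) * Fp x T"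
  unfolding Fp_def Z2_def Z2_def Z4_def by algebra

lemma idstep5: "(1) * Z4 x T * Z1 x T - ((T^2+T-1)*(T^4-3*T^3-T^2+3*T+1)) * ((T^2+T-1)*(T-2)^2*(T^4-3*T^3-T^2+3*T+1)) * Z5 x T = ((1 - 22*T - 4*T^2 + 35*T^3 + 4*T^4 - 13*T^5 - 24*T^6 + 32*T^7 - 15*T^8 + 3*T^9) + (- 5 + 2*T - T^2 + 7*T^3 - 11*T^4 - 30*T^5 + 69*T^6 - 47*T^7 + 14*T^8 - 2*T^9)*x + (- 1 - 18*T + 8*T^2 + 11*T^3 - 13*T^4 + 38*T^5 - 51*T^6 + 26*T^7 - 3*T^8 - T^9)*x^2 + (- 3 + 14*T - 9*T^2 - 25*T^3 + 31*T^4 - 11*T^5 + 3*T^6 + 2*T^7 - 5*T^8 + 2*T^9)*x^3) * Fp x T"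
  unfolding Fp_def Z4_def Z1_def Z5_def by algebra

lemma idstep6: "((T^2+T-1)^2*(T-2)*(T^4-3*T^3-T^2+3*T+1)) * Z3 x T * Z3 x T - ((T^2+T-1)*(T-2)*(T^4-3*T^3-T^2+3*T+1)) * ((T^2+T-1)*(T-2)*(T^4-3*T^3-T^2+3*T+1)) * Z6 x T = ((16 + 16*T - 168*T^2 + 8*T^3 + 585*T^4 - 659*T^5 - 324*T^6 + 1792*T^7 - 1847*T^8 - 310*T^9 + 2297*T^10 - 2138*T^11 + 409*T^12 + 966*T^13 - 835*T^14 + 108*T^15 + 148*T^16 - 69*T^17 + 9*T^18) + (- 8 + 16*T + 130*T^2 - 298*T^3 - 565*T^4 + 1872*T^5 - 14*T^6 - 4380*T^7 + 4332*T^8 + 1865*T^9 - 6291*T^10 + 3552*T^11 + 1370*T^12 - 2396*T^13 + 740*T^14 + 241*T^15 - 212*T^16 + 50*T^17 - 4*T^18)*x + (18 - 3*T - 257*T^2 + 267*T^3 + 1260*T^4 - 2357*T^5 - 1808*T^6 + 7113*T^7 - 2533*T^8 - 7160*T^9 + 6956*T^10 + 679*T^11 - 3614*T^12 + 1364*T^13 + 390*T^14 - 391*T^15 + 66*T^16 + 14*T^17 - 4*T^18)*x^2 + (- 16 + 248*T^2 - 152*T^3 - 1385*T^4 + 1534*T^5 + 3165*T^6 - 5317*T^7 - 1957*T^8 + 7360*T^9 - 1922*T^10 - 3940*T^11 + 2481*T^12 + 571*T^13 - 865*T^14 + 142*T^15 + 85*T^16 - 36*T^17 + 4*T^18)*x^3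 + (4 - 67*T^2 + 33*T^3 + 420*T^4 - 356*T^5 - 1215*T^6 + 1378*T^7 + 1633*T^8 - 2370*T^9 - 947*T^10 + 1990*T^11 + 141*T^12 - 864*T^13 + 80*T^14 + 187*T^15 - 35*T^16 - 16*T^17 + 4*T^18)*x^4) * Fp x T"
  unfolding Fp_def Z3_def Z3_def Z6_def by algebra

lemma idconic: "(T^2+T-1)*(T-2)^2*(T^4-3*T^3-T^2+3*T+1)*(T^2+T-1)*(T^4-3*T^3-T^2+3*T+1)*(x^2+1) + (T^2+T-1)*(T-2)^2*(T^4-3*T^3-T^2+3*T+1)*Z2 x T + T*((T^2+T-1)*(T^4-3*T^3-T^2+3*T+1)*x*Z1 x T + (T^2+T-1)*(T-2)^2*(T^4-3*T^3-T^2+3*T+1)*(T^2+T-1)*(T^4-3*T^3-T^2+3*T+1)*x + (T^2+T-1)*(T^4-3*T^3-T^2+3*T+1)*Z1 x T) = ((- 3*T - 4*T^2 + 18*T^3 + 4*T^4 - 18*T^5 + 4*T^6 - 3*T^7 + T^8 + 3*T^9 - T^10)) * Fp x T"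
  unfolding Fp_def Z1_def Z2_def by algebra

lemma idfin: "(T-2)*(T^2+T-1)^2*((T^2+T-1)^2*(T-2)^2*(T^4-3*T^3-T^2+3*T+1)) + (3*T^2-2*T+2)*(T-2)*(T^2+T-1)*(T^2+T-1)*Z1 x T
 + (T^5-5*T^4+10*T^3-20*T^2+15*T-7)*((T^2+T-1)*(T-2)^2)*Z2 x T + (-3*T^5+10*T^4-20*T^3+20*T^2-20*T+6)*((T^2+T-1)*(T-2))*Z3 x T
 + (T^5-5*T^4+10*T^3-20*T^2+15*T-7)*((T^2+T-1)*(T-2)^2)*Z4 x T + (3*T^2-2*T+2)*(T-2)*(T^2+T-1)*((T^2+T-1)^2*(T-2)^2*(T^4-3*T^3-T^2+3*T+1))*Z5 x T
 + (T-2)*(T^2+T-1)^2*(T-2)*Z6 x T = 0"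
  unfolding Z1_def Z2_def Z3_def Z4_def Z5_def Z6_def by algebra

lemma fxL:
  fixes x T U V W :: complex
  assumes "U = (3*T^2-2*T+2)/(T^2+T-1)"
    "V = (T^5-5*T^4+10*T^3-20*T^2+15*T-7)/((T-2)*(T^2+T-1)^2)"
    "W = (-3*T^5+10*T^4-20*T^3+20*T^2-20*T+6)/((T-2)*(T^2+T-1)^2)"
    "T^2+T-1 \<noteq> 0" "T-2 \<noteq> 0"
    "1 + U*x + V*x^2 + W*x^3 + V*x^4 + U*x^5 + x^6 = 0"
  shows "Fp x T = 0"
proof -
  have eU: "U*((T-2)*(T^2+T-1)^2) = (3*T^2-2*T+2)*((T-2)*(T^2+T-1))"
    by (rule fracL[OF _ assms(1)]) (use assms(4,5) in simp, algebra)
  have eV: "V*((T-2)*(T^2+T-1)^2) = (T^5-5*T^4+10*T^3-20*T^2+15*T-7)*1"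
    by (rule fracL[OF _ assms(2)]) (use assms(4,5) in simp, algebra)
  have eW: "W*((T-2)*(T^2+T-1)^2) = (-3*T^5+10*T^4-20*T^3+20*T^2-20*T+6)*1"
    by (rule fracL[OF _ assms(3)]) (use assms(4,5) in simp, algebra)
  have "((T-2)*(T^2+T-1)^2) * (1 + U*x + V*x^2 + W*x^3 + V*x^4 + U*x^5 + x^6) = ((T-2)*(T^2+T-1)^2) + (U*((T-2)*(T^2+T-1)^2))*x + (V*((T-2)*(T^2+T-1)^2))*x^2 + (W*((T-2)*(T^2+T-1)^2))*x^3 + (V*((T-2)*(T^2+T-1)^2))*x^4 + (U*((T-2)*(T^2+T-1)^2))*x^5 + ((T-2)*(T^2+T-1)^2)*x^6" by algebra
  also have "\<dots> = Fp x T" unfolding eU eV eW Fp_def by algebra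
  finally show ?thesis using assms(6) by simp
qed

lemma y1L:
  fixes x T A0 A1 A2 A3 A4 A5 :: complex
  assumes nz: "T^2+T-1 \<noteq> 0" "T-2 \<noteq> 0" "T^4-3*T^3-T^2+3*T+1 \<noteq> 0"
  and "A0 = - ((T^2 + 1) * (T^3 - T^2 + 2*T - 3)) / ((T^4-3*T^3-T^2+3*T+1)*(T-2))"
  and "A1 = - (3*T^7 - 9*T^6 + 16*T^5 - 15*T^4 + 10*T^3 - 11*T^2 + 8*T - 7) / ((T^2 + T - 1) * ((T^4-3*T^3-T^2+3*T+1)*(T-2)))"
  and "A2 = (2*T^8 - 14*T^7 + 52*T^6 - 99*T^5 + 100*T^4 - 54*T^3 + 38*T^2 - 44*T + 13) / ((T^2 + T - 1) * (T - 2) * ((T^4-3*T^3-T^2+3*T+1)*(T-2)))"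
  and "A3 = (T^8 + T^7 - 21*T^6 + 65*T^5 - 90*T^4 + 78*T^3 - 57*T^2 + 32*T - 15) / ((T^2 + T - 1) * (T - 2) * ((T^4-3*T^3-T^2+3*T+1)*(T-2)))"
  and "A4 = - (2*T^5 - 6*T^4 + 13*T^3 - 14*T^2 + 7*T - 5) / ((T^4-3*T^3-T^2+3*T+1)*(T-2))"
  and "A5 = - ((T^2 + T - 1) * (T^3 - T^2 + 2*T - 3)) / ((T^4-3*T^3-T^2+3*T+1)*(T-2))"
  shows "(A0 + A1*x + A2*x^2 + A3*x^3 + A4*x^4 + A5*x^5) * ((T^2+T-1)*(T-2)^2*(T^4-3*T^3-T^2+3*T+1)) = Z1 x T"
proof -
  have e0: "A0*((T^2+T-1)*(T-2)^2*(T^4-3*T^3-T^2+3*T+1)) = (- ((T^2 + 1) * (T^3 - T^2 + 2*T - 3)))*((T^2+T-1)*(T-2))"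
    by (rule fracL[OF _ assms(4)]) (use nz in simp, algebra)
  have e1: "A1*((T^2+T-1)*(T-2)^2*(T^4-3*T^3-T^2+3*T+1)) = (- (3*T^7 - 9*T^6 + 16*T^5 - 15*T^4 + 10*T^3 - 11*T^2 + 8*T - 7))*(T-2)"
    by (rule fracL[OF _ assms(5)]) (use nz in simp, algebra)
  have e2: "A2*((T^2+T-1)*(T-2)^2*(T^4-3*T^3-T^2+3*T+1)) = (2*T^8 - 14*T^7 + 52*T^6 - 99*T^5 + 100*T^4 - 54*T^3 + 38*T^2 - 44*T + 13)*1"
    by (rule fracL[OF _ assms(6)]) (use nz in simp, algebra)
  have e3: "A3*((T^2+T-1)*(T-2)^2*(T^4-3*T^3-T^2+3*T+1)) = (T^8 + T^7 - 21*T^6 + 65*T^5 - 90*T^4 + 78*T^3 - 57*T^2 + 32*T - 15)*1"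
    by (rule fracL[OF _ assms(7)]) (use nz in simp, algebra)
  have e4: "A4*((T^2+T-1)*(T-2)^2*(T^4-3*T^3-T^2+3*T+1)) = (- (2*T^5 - 6*T^4 + 13*T^3 - 14*T^2 + 7*T - 5))*((T^2+T-1)*(T-2))"
    by (rule fracL[OF _ assms(8)]) (use nz in simp, algebra)
  have e5: "A5*((T^2+T-1)*(T-2)^2*(T^4-3*T^3-T^2+3*T+1)) = (- ((T^2 + T - 1) * (T^3 - T^2 + 2*T - 3)))*((T^2+T-1)*(T-2))"
    by (rule fracL[OF _ assms(9)]) (use nz in simp, algebra)
  have "(A0 + A1*x + A2*x^2 + A3*x^3 + A4*x^4 + A5*x^5) * ((T^2+T-1)*(T-2)^2*(T^4-3*T^3-T^2+3*T+1)) = A0*((T^2+T-1)*(T-2)^2*(T^4-3*T^3-T^2+3*T+1)) + (A1*((T^2+T-1)*(T-2)^2*(T^4-3*T^3-T^2+3*T+1)))*x + (A2*((T^2+T-1)*(T-2)^2*(T^4-3*T^3-T^2+3*T+1)))*x^2 + (A3*((T^2+T-1)*(T-2)^2*(T^4-3*T^3-T^2+3*T+1)))*x^3 + (A4*((T^2+T-1)*(T-2)^2*(T^4-3*T^3-T^2+3*T+1)))*x^4 + (A5*((T^2+T-1)*(T-2)^2*(T^4-3*T^3-T^2+3*T+1)))*x^5" by algebra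
  also have "\<dots> = Z1 x T" unfolding e0 e1 e2 e3 e4 e5 Z1_def by algebra
  finally show ?thesis .
qed

lemma conicL:
  fixes x y T :: complex
  assumes "y*((T^2+T-1)*(T-2)^2*(T^4-3*T^3-T^2+3*T+1)) = Z1 x T" "y^2*((T^2+T-1)*(T^4-3*T^3-T^2+3*T+1)) = Z2 x T" "Fp x T = 0"
    "T^2+T-1 \<noteq> 0" "T-2 \<noteq> 0" "(T^4-3*T^3-T^2+3*T+1) \<noteq> 0"
  shows "x^2 + y^2 + 1 + T*(x*y + x + y) = 0"
proof -
  have "(((T^2+T-1)*(T-2)^2*(T^4-3*T^3-T^2+3*T+1))*((T^2+T-1)*(T^4-3*T^3-T^2+3*T+1)))*(x^2 + y^2 + 1 + T*(x*y + x + y)) = (T^2+T-1)*(T-2)^2*(T^4-3*T^3-T^2+3*T+1)*(T^2+T-1)*(T^4-3*T^3-T^2+3*T+1)*(x^2+1) + (T^2+T-1)*(T-2)^2*(T^4-3*T^3-T^2+3*T+1)*(y^2*((T^2+T-1)*(T^4-3*T^3-T^2+3*T+1))) + T*((T^2+T-1)*(T^4-3*T^3-T^2+3*T+1)*x*(y*((T^2+T-1)*(T-2)^2*(T^4-3*T^3-T^2+3*T+1))) + (T^2+T-1)*(T-2)^2*(T^4-3*T^3-T^2+3*T+1)*(T^2+T-1)*(T^4-3*T^3-T^2+3*T+1)*x + (T^2+T-1)*(T^4-3*T^3-T^2+3*T+1)*(y*((T^2+T-1)*(T-2)^2*(T^4-3*T^3-T^2+3*T+1))))"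
    by algebra
  also have "\<dots> = 0" unfolding assms(1,2) idconic assms(3) by simp
  finally show ?thesis using assms(4-6) by simp
qed

lemma finL:
  fixes x y T U V W :: complex
  assumes "U = (3*T^2-2*T+2)/(T^2+T-1)"
    "V = (T^5-5*T^4+10*T^3-20*T^2+15*T-7)/((T-2)*(T^2+T-1)^2)"
    "W = (-3*T^5+10*T^4-20*T^3+20*T^2-20*T+6)/((T-2)*(T^2+T-1)^2)"
    "T^2+T-1 \<noteq> 0" "T-2 \<noteq> 0" "(T^4-3*T^3-T^2+3*T+1) \<noteq> 0"
    "y*((T^2+T-1)*(T-2)^2*(T^4-3*T^3-T^2+3*T+1)) = Z1 x T" "y^2*((T^2+T-1)*(T^4-3*T^3-T^2+3*T+1)) = Z2 x T" "y^3*((T^2+T-1)*(T-2)*(T^4-3*T^3-T^2+3*T+1)) = Z3 x T" "y^4*((T^2+T-1)*(T^4-3*T^3-T^2+3*T+1)) = Z4 x T"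
    "y^5*1 = Z5 x T" "y^6*((T^2+T-1)^2*(T-2)*(T^4-3*T^3-T^2+3*T+1)) = Z6 x T"
  shows "1 + U*y + V*y^2 + W*y^3 + V*y^4 + U*y^5 + y^6 = 0"
proof -
  have eU0: "U*((T-2)*(T^2+T-1)^2) = (3*T^2-2*T+2)*((T-2)*(T^2+T-1))"
    by (rule fracL[OF _ assms(1)]) (use assms(4,5) in simp, algebra)
  have eU: "U*((T-2)*(T^2+T-1)^2) = (3*T^2-2*T+2)*(T-2)*(T^2+T-1)"
    using eU0 by (simp only: mult.assoc)
  have eV: "V*((T-2)*(T^2+T-1)^2) = (T^5-5*T^4+10*T^3-20*T^2+15*T-7)*1"
    by (rule fracL[OF _ assms(2)]) (use assms(4,5) in simp, algebra)
  have eW: "W*((T-2)*(T^2+T-1)^2) = (-3*T^5+10*T^4-20*T^3+20*T^2-20*T+6)*1"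
    by (rule fracL[OF _ assms(3)]) (use assms(4,5) in simp, algebra)
  have "(1 + U*y + V*y^2 + W*y^3 + V*y^4 + U*y^5 + y^6)*(((T-2)*(T^2+T-1)^2)*((T^2+T-1)^2*(T-2)^2*(T^4-3*T^3-T^2+3*T+1))) =
     ((T-2)*(T^2+T-1)^2)*((T^2+T-1)^2*(T-2)^2*(T^4-3*T^3-T^2+3*T+1)) + (U*((T-2)*(T^2+T-1)^2))*(T^2+T-1)*(y*((T^2+T-1)*(T-2)^2*(T^4-3*T^3-T^2+3*T+1))) + (V*((T-2)*(T^2+T-1)^2))*((T^2+T-1)*(T-2)^2)*(y^2*((T^2+T-1)*(T^4-3*T^3-T^2+3*T+1))) + (W*((T-2)*(T^2+T-1)^2))*((T^2+T-1)*(T-2))*(y^3*((T^2+T-1)*(T-2)*(T^4-3*T^3-T^2+3*T+1)))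
     + (V*((T-2)*(T^2+T-1)^2))*((T^2+T-1)*(T-2)^2)*(y^4*((T^2+T-1)*(T^4-3*T^3-T^2+3*T+1))) + (U*((T-2)*(T^2+T-1)^2))*((T^2+T-1)^2*(T-2)^2*(T^4-3*T^3-T^2+3*T+1))*(y^5*1) + ((T-2)*(T^2+T-1)^2)*(T-2)*(y^6*((T^2+T-1)^2*(T-2)*(T^4-3*T^3-T^2+3*T+1)))"
    by algebra
  also have "\<dots> = 0" unfolding eU eV eW assms(7-12) using idfin[of T x] by simp
  finally show ?thesis using assms(4-6) by simp
qed

theorem proposition3:
  fixes t :: rat and x :: complex
  assumes "t \<noteq> 2"
    and "poly (map_poly of_rat (f_t t)) x = 0"
  defines "y \<equiv> (\<Sum>i\<le>5. of_rat (a_coef t i) * x ^ i)"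
  shows "poly (map_poly of_rat (f_t t)) y = 0 \<and> on_F5 x y 1 \<and> on_Ct t x y 1"
proof -
  define T where "T = (of_rat t :: complex)"
  have n1r: "of_rat (t^2+t-1) \<noteq> (0::complex)" using d1_nz[of t] by simp
  have n1: "T^2+T-1 \<noteq> 0" using n1r by (simp add: T_def of_rat_add of_rat_diff of_rat_mult of_rat_power of_rat_divide of_rat_minus)
  have n2r: "of_rat (t-2) \<noteq> (0::complex)" using assms(1) by simp
  have n2: "T-2 \<noteq> 0" using n2r by (simp add: T_def of_rat_add of_rat_diff of_rat_mult of_rat_power of_rat_divide of_rat_minus)
  have nqr: "of_rat (t^4-3*t^3-t^2+3*t+1) \<noteq> (0::complex)" using q_nz[of t] by simp
  have nq: "(T^4-3*T^3-T^2+3*T+1) \<noteq> 0" using nqr by (simp add: T_def of_rat_add of_rat_diff of_rat_mult of_rat_power of_rat_divide of_rat_minus)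
  have pe: "\<And>z. poly (map_poly of_rat (f_t t)) z = 1 + of_rat(ft_u t)*z + of_rat(ft_v t)*z^2 + of_rat(ft_w t)*z^3 + of_rat(ft_v t)*z^4 + of_rat(ft_u t)*z^5 + z^6"
    by (simp add: f_t_def map_poly_pCons) algebra
  have U: "of_rat (ft_u t) = (3*T^2-2*T+2)/(T^2+T-1)"
    by (simp add: T_def ft_u_def of_rat_add of_rat_diff of_rat_mult of_rat_power of_rat_divide of_rat_minus)
  have V: "of_rat (ft_v t) = (T^5-5*T^4+10*T^3-20*T^2+15*T-7)/((T-2)*(T^2+T-1)^2)"
    by (simp add: T_def ft_v_def of_rat_add of_rat_diff of_rat_mult of_rat_power of_rat_divide of_rat_minus)
  have W: "of_rat (ft_w t) = (-3*T^5+10*T^4-20*T^3+20*T^2-20*T+6)/((T-2)*(T^2+T-1)^2)"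
    by (simp add: T_def ft_w_def of_rat_add of_rat_diff of_rat_mult of_rat_power of_rat_divide of_rat_minus)
  have fx: "Fp x T = 0"
    using fxL[OF U V W n1 n2] assms(2) unfolding pe by blast
  have A0: "of_rat (a_coef t 0) = - ((T^2 + 1) * (T^3 - T^2 + 2*T - 3)) / ((T^4-3*T^3-T^2+3*T+1)*(T-2))"
    by (simp add: T_def a_coef_def s_t_def of_rat_add of_rat_diff of_rat_mult of_rat_power of_rat_divide of_rat_minus)
  have A1: "of_rat (a_coef t 1) = - (3*T^7 - 9*T^6 + 16*T^5 - 15*T^4 + 10*T^3 - 11*T^2 + 8*T - 7) / ((T^2 + T - 1) * ((T^4-3*T^3-T^2+3*T+1)*(T-2)))"
    by (simp add: T_def a_coef_def s_t_def of_rat_add of_rat_diff of_rat_mult of_rat_power of_rat_divide of_rat_minus)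
  have A2: "of_rat (a_coef t 2) = (2*T^8 - 14*T^7 + 52*T^6 - 99*T^5 + 100*T^4 - 54*T^3 + 38*T^2 - 44*T + 13) / ((T^2 + T - 1) * (T - 2) * ((T^4-3*T^3-T^2+3*T+1)*(T-2)))"
    by (simp add: T_def a_coef_def s_t_def of_rat_add of_rat_diff of_rat_mult of_rat_power of_rat_divide of_rat_minus)
  have A3: "of_rat (a_coef t 3) = (T^8 + T^7 - 21*T^6 + 65*T^5 - 90*T^4 + 78*T^3 - 57*T^2 + 32*T - 15) / ((T^2 + T - 1) * (T - 2) * ((T^4-3*T^3-T^2+3*T+1)*(T-2)))"
    by (simp add: T_def a_coef_def s_t_def of_rat_add of_rat_diff of_rat_mult of_rat_power of_rat_divide of_rat_minus)
  have A4: "of_rat (a_coef t 4) = - (2*T^5 - 6*T^4 + 13*T^3 - 14*T^2 + 7*T - 5) / ((T^4-3*T^3-T^2+3*T+1)*(T-2))"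
    by (simp add: T_def a_coef_def s_t_def of_rat_add of_rat_diff of_rat_mult of_rat_power of_rat_divide of_rat_minus)
  have A5: "of_rat (a_coef t 5) = - ((T^2 + T - 1) * (T^3 - T^2 + 2*T - 3)) / ((T^4-3*T^3-T^2+3*T+1)*(T-2))"
    by (simp add: T_def a_coef_def s_t_def of_rat_add of_rat_diff of_rat_mult of_rat_power of_rat_divide of_rat_minus)
  have ys: "y = of_rat (a_coef t 0) + of_rat (a_coef t 1)*x + of_rat (a_coef t 2)*x^2 + of_rat (a_coef t 3)*x^3 + of_rat (a_coef t 4)*x^4 + of_rat (a_coef t 5)*x^5"
    unfolding y_def by (simp add: numeral_eq_Suc atMost_Suc)
  have y1: "y*((T^2+T-1)*(T-2)^2*(T^4-3*T^3-T^2+3*T+1)) = Z1 x T"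
    unfolding ys by (rule y1L[OF n1 n2 nq A0 A1 A2 A3 A4 A5])
  have nD1: "((T^2+T-1)*(T-2)^2*(T^4-3*T^3-T^2+3*T+1)) \<noteq> 0" using n1 n2 nq by simp
  have nD2: "((T^2+T-1)*(T^4-3*T^3-T^2+3*T+1)) \<noteq> 0" using n1 n2 nq by simp
  have nD3: "((T^2+T-1)*(T-2)*(T^4-3*T^3-T^2+3*T+1)) \<noteq> 0" using n1 n2 nq by simp
  have nD4: "((T^2+T-1)*(T^4-3*T^3-T^2+3*T+1)) \<noteq> 0" using n1 n2 nq by simp
  have y2: "y^2*((T^2+T-1)*(T^4-3*T^3-T^2+3*T+1)) = Z2 x T"
    using stepL[OF y1 y1 fx idstep2 nD1 nD1] by (simp only: power2_eq_square)
  have y3: "y^3*((T^2+T-1)*(T-2)*(T^4-3*T^3-T^2+3*T+1)) = Z3 x T"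
  proof -
    have e: "y^3 = y^2*y" by algebra
    show ?thesis using stepL[OF y2 y1 fx idstep3 nD2 nD1] by (simp only: e)
  qed
  have y4: "y^4*((T^2+T-1)*(T^4-3*T^3-T^2+3*T+1)) = Z4 x T"
  proof -
    have e: "y^4 = y^2*y^2" by algebra
    show ?thesis using stepL[OF y2 y2 fx idstep4 nD2 nD2] by (simp only: e)
  qed
  have y5: "y^5*1 = Z5 x T"
  proof -
    have e: "y^5 = y^4*y" by algebra
    show ?thesis using stepL[OF y4 y1 fx idstep5 nD4 nD1] by (simp only: e)
  qed
  have y6: "y^6*((T^2+T-1)^2*(T-2)*(T^4-3*T^3-T^2+3*T+1)) = Z6 x T"
  proof -
    have e: "y^6 = y^3*y^3" by algebra
    show ?thesis using stepL[OF y3 y3 fx idstep6 nD3 nD3] by (simp only: e)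
  qed
  have c1: "poly (map_poly of_rat (f_t t)) y = 0"
    unfolding pe by (rule finL[OF U V W n1 n2 nq y1 y2 y3 y4 y5 y6])
  have c2: "on_F5 x y 1"
    using y5 unfolding on_F5_def Z5_def by (simp add: algebra_simps)
  have c3: "on_Ct t x y 1"
    using conicL[OF y1 y2 fx n1 n2 nq] unfolding on_Ct_def T_def by simp
  show ?thesis using c1 c2 c3 by blast
qed

end
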